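(* Let $G$ and $H$ be finite AC-groups with $|G|=|H|$. Then $A_G(t)=A_H(t)$ if and only if $B_G(t)=B_H(t)$.
   Context: A finite group $G$ is an AC-group if the centralizer of every non-central element is abelian. For a finite group $G$ and $n\ge 0$, $G$ acts on $G^n$ by simultaneous conjugation. Let $G^{(n)}\subseteq G^n$ be the set of $n$-tuples of pairwise commuting elements. Let $\alpha_{G,n}$ (resp. $\beta_{G,n}$) be the number of $G$-orbits on $G^n$ (resp. on $G^{(n)}$), and set $A_G(t)=\sum_{n\ge0}\alpha_{G,n}t^n$, $B_G(t)=\sum_{n\ge0}\beta_{G,n}t^n$. *)

theory Defs
  imports "HOL-Algebra.Group" "HOL-Library.FuncSet" "HOL-Computational_Algebra.Formal_Power_Series"
begin

definition grp_center :: "('a, 'b) monoid_scheme \<Rightarrow> 'a set" where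
  "grp_center G = {z \<in> carrier G. \<forall>x \<in> carrier G. z \<otimes>\<^bsub>G\<^esub> x = x \<otimes>\<^bsub>G\<^esub> z}"

definition grp_centralizer :: "('a, 'b) monoid_scheme \<Rightarrow> 'a \<Rightarrow> 'a set" where
  "grp_centralizer G a = {x \<in> carrier G. x \<otimes>\<^bsub>G\<^esub> a = a \<otimes>\<^bsub>G\<^esub> x}"

definition AC_group :: "('a, 'b) monoid_scheme \<Rightarrow> bool" where
  "AC_group G \<longleftrightarrow> group G \<and>
     (\<forall>a \<in> carrier G. a \<notin> grp_center G \<longrightarrow>
        (\<forall>x \<in> grp_centralizer G a. \<forall>y \<in> grp_centralizer G a.
            x \<otimes>\<^bsub>G\<^esub> y = y \<otimes>\<^bsub>G\<^esub> x))"

definition tuples :: "('a, 'b) monoid_scheme \<Rightarrow> nat \<Rightarrow> (nat \<Rightarrow> 'a) set" where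
  "tuples G n = {0..<n} \<rightarrow>\<^sub>E carrier G"

definition comm_tuples :: "('a, 'b) monoid_scheme \<Rightarrow> nat \<Rightarrow> (nat \<Rightarrow> 'a) set" where
  "comm_tuples G n = {x \<in> tuples G n. \<forall>i<n. \<forall>j<n. x i \<otimes>\<^bsub>G\<^esub> x j = x j \<otimes>\<^bsub>G\<^esub> x i}"

definition sconj :: "('a, 'b) monoid_scheme \<Rightarrow> nat \<Rightarrow> 'a \<Rightarrow> (nat \<Rightarrow> 'a) \<Rightarrow> (nat \<Rightarrow> 'a)" where
  "sconj G n g x = (\<lambda>i\<in>{0..<n}. g \<otimes>\<^bsub>G\<^esub> x i \<otimes>\<^bsub>G\<^esub> inv\<^bsub>G\<^esub> g)"

definition sconj_orbit :: "('a, 'b) monoid_scheme \<Rightarrow> nat \<Rightarrow> (nat \<Rightarrow> 'a) \<Rightarrow> (nat \<Rightarrow> 'a) set" where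
  "sconj_orbit G n x = (\<lambda>g. sconj G n g x) ` carrier G"

definition num_orbits :: "('a, 'b) monoid_scheme \<Rightarrow> nat \<Rightarrow> (nat \<Rightarrow> 'a) set \<Rightarrow> nat" where
  "num_orbits G n X = card (sconj_orbit G n ` X)"

definition alpha :: "('a, 'b) monoid_scheme \<Rightarrow> nat \<Rightarrow> nat" where
  "alpha G n = num_orbits G n (tuples G n)"

definition beta :: "('a, 'b) monoid_scheme \<Rightarrow> nat \<Rightarrow> nat" where
  "beta G n = num_orbits G n (comm_tuples G n)"

definition A_series :: "('a, 'b) monoid_scheme \<Rightarrow> int fps" where
  "A_series G = Abs_fps (\<lambda>n. int (alpha G n))"

definition B_series :: "('a, 'b) monoid_scheme \<Rightarrow> int fps" where
  "B_series G = Abs_fps (\<lambda>n. int (beta G n))"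

end

theory Submission
  imports Defs "HOL-Algebra.Group_Action"
begin

lemma expsum_indep:
  fixes w :: "nat \<Rightarrow> real"
  assumes "\<And>n. (\<Sum>b\<le>N. w b * real b ^ n) = 0"
  shows "\<forall>b\<le>N. w b = 0"
  using assms
proof (induction N)
  case 0
  then show ?case using 0[of 0] by simp
next
  case (Suc N)
  define M where "M = Suc N"
  have Mpos: "real M > 0" unfolding M_def by simp
  have eq0: "(\<Sum>b\<le>N. w b * (real b / real M) ^ n) + w M = 0" for n
  proof -
    have "(\<Sum>b\<le>M. w b * (real b / real M) ^ n) = (\<Sum>b\<le>M. w b * real b ^ n) / real M ^ n"
      by (simp add: sum_divide_distrib power_divide)
    also have "\<dots> = 0" using Suc.prems[of n] unfolding M_def by simp
    finally show ?thesis using Mpos unfolding M_def by simp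
  qed
  have lim: "(\<lambda>n. (\<Sum>b\<le>N. w b * (real b / real M) ^ n) + w M) \<longlonglongrightarrow> 0 + w M"
  proof (intro tendsto_add tendsto_const tendsto_null_sum)
    fix b assume "b \<in> {..N}"
    then have "real b / real M < 1" "0 \<le> real b / real M" using Mpos unfolding M_def by auto
    then have "(\<lambda>n. (real b / real M) ^ n) \<longlonglongrightarrow> 0" by (intro LIMSEQ_power_zero) auto
    then show "(\<lambda>n. w b * (real b / real M) ^ n) \<longlonglongrightarrow> 0"
      by (simp add: tendsto_mult_right_zero)
  qed
  have "w M = 0"
  proof -
    have "(\<lambda>n. (\<Sum>b\<le>N. w b * (real b / real M) ^ n) + w M) \<longlonglongrightarrow> 0"
      using eq0 by simp
    with lim show ?thesis using LIMSEQ_unique by fastforce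
  qed
  then have "\<And>n. (\<Sum>b\<le>N. w b * real b ^ n) = 0"
    using Suc.prems unfolding M_def by simp
  then have "\<forall>b\<le>N. w b = 0" by (rule Suc.IH)
  then show ?case using \<open>w M = 0\<close> unfolding M_def by (auto simp: le_Suc_eq)
qed


lemma regroup:
  fixes v :: "'i \<Rightarrow> real"
  assumes "finite I" "\<forall>i\<in>I. d i \<le> N"
  shows "(\<Sum>i\<in>I. v i * real (d i) ^ n) = (\<Sum>b\<le>N. (\<Sum>i\<in>{i\<in>I. d i = b}. v i) * real b ^ n)"
proof -
  have "(\<Sum>i\<in>I. v i * real (d i) ^ n) = (\<Sum>b\<in>{..N}. \<Sum>i | i \<in> I \<and> d i = b. v i * real (d i) ^ n)"
    using assms by (intro sum.group[symmetric]) auto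
  also have "\<dots> = (\<Sum>b\<le>N. (\<Sum>i\<in>{i\<in>I. d i = b}. v i) * real b ^ n)"
    by (intro sum.cong refl) (auto simp: sum_distrib_right)
  finally show ?thesis .
qed

definition acdata :: "nat \<Rightarrow> nat \<Rightarrow> 'i set \<Rightarrow> ('i \<Rightarrow> nat) \<Rightarrow> (nat \<Rightarrow> nat) \<Rightarrow> (nat \<Rightarrow> nat) \<Rightarrow> (nat \<Rightarrow> nat) \<Rightarrow> bool" where
  "acdata N z I d a b c \<longleftrightarrow> 0 < N \<and> z \<le> N \<and> finite I \<and> (\<forall>i\<in>I. z < d i \<and> d i < N) \<and>
     (\<forall>n. N * a n = z * N ^ n + (\<Sum>i\<in>I. d i ^ n)) \<and>
     (\<forall>n. N * b n = z * c n + (\<Sum>i\<in>I. d i ^ n)) \<and> c 0 = 1 \<and> (\<forall>n. c (Suc n) = N * b n) \<and>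
     (\<Sum>i\<in>I. 1 / (real (d i) - real z)) \<noteq> 1"

lemma acdata_a_form:
  assumes "acdata N z I d a b c"
  shows "real (N * a n) = (\<Sum>b'\<le>N. ((if b' = N then real z else 0) + (\<Sum>i\<in>{i\<in>I. d i = b'}. 1)) * real b' ^ n)"
proof -
  have fin: "finite I" and dl: "\<forall>i\<in>I. d i \<le> N" using assms unfolding acdata_def by auto
  have e: "N * a n = z * N ^ n + (\<Sum>i\<in>I. d i ^ n)" using assms unfolding acdata_def by blast
  have "real (N * a n) = real (z * N ^ n + (\<Sum>i\<in>I. d i ^ n))" using e by (rule arg_cong)
  also have "\<dots> = real z * real N ^ n + (\<Sum>i\<in>I. 1 * real (d i) ^ n)" by simp
  also have "(\<Sum>i\<in>I. 1 * real (d i) ^ n) = (\<Sum>b'\<le>N. (\<Sum>i\<in>{i\<in>I. d i = b'}. 1) * real b' ^ n)"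
    by (rule regroup[OF fin dl])
  also have "real z * real N ^ n = (\<Sum>b'\<le>N. (if b' = N then real z else 0) * real b' ^ n)"
  proof -
    have "(\<Sum>b'\<le>N. (if b' = N then real z else 0) * real b' ^ n) = (\<Sum>b'\<le>N. if b' = N then real z * real N ^ n else 0)"
      by (intro sum.cong) auto
    then show ?thesis by simp
  qed
  finally show ?thesis by (simp add: sum.distrib distrib_right)
qed

lemma acdata_c_closed:
  assumes "acdata N z I d a b c"
  shows "real (c n) = (1 - (\<Sum>i\<in>I. 1 / (real (d i) - real z))) * real z ^ n
           + (\<Sum>i\<in>I. 1 / (real (d i) - real z) * real (d i) ^ n)"
proof (induction n)
  case 0
  then show ?case using assms unfolding acdata_def by simp
next
  case (Suc n)
  let ?K = "\<Sum>i\<in>I. 1 / (real (d i) - real z)"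
  have dz: "\<forall>i\<in>I. real z < real (d i)" using assms unfolding acdata_def by auto
  have e: "c (Suc n) = z * c n + (\<Sum>i\<in>I. d i ^ n)" using assms unfolding acdata_def by metis
  have "real (c (Suc n)) = real (z * c n + (\<Sum>i\<in>I. d i ^ n))" using e by (rule arg_cong)
  also have "\<dots> = real z * real (c n) + (\<Sum>i\<in>I. real (d i) ^ n)" by simp
  also have "\<dots> = (1 - ?K) * real z ^ Suc n + (\<Sum>i\<in>I. real z * (1 / (real (d i) - real z) * real (d i) ^ n) + real (d i) ^ n)"
    unfolding Suc by (simp add: algebra_simps sum_distrib_left sum.distrib)
  also have "(\<Sum>i\<in>I. real z * (1 / (real (d i) - real z) * real (d i) ^ n) + real (d i) ^ n)
      = (\<Sum>i\<in>I. 1 / (real (d i) - real z) * real (d i) ^ Suc n)"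
  proof (intro sum.cong refl)
    fix i assume "i \<in> I"
    then have "real (d i) - real z \<noteq> 0" using dz by auto
    then show "real z * (1 / (real (d i) - real z) * real (d i) ^ n) + real (d i) ^ n
      = 1 / (real (d i) - real z) * real (d i) ^ Suc n"
      by (simp add: field_simps)
  qed
  finally show ?case .
qed

lemma acdata_c_form:
  assumes "acdata N z I d a b c"
  shows "real (c n) = (\<Sum>b'\<le>N. ((if b' = z then 1 - (\<Sum>i\<in>I. 1 / (real (d i) - real z)) else 0)
          + (\<Sum>i\<in>{i\<in>I. d i = b'}. 1 / (real (d i) - real z))) * real b' ^ n)"
proof -
  have fin: "finite I" and dl: "\<forall>i\<in>I. d i \<le> N" and zN: "z \<le> N" using assms unfolding acdata_def by auto
  let ?K = "\<Sum>i\<in>I. 1 / (real (d i) - real z)"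
  have "real (c n) = (1 - ?K) * real z ^ n + (\<Sum>i\<in>I. 1 / (real (d i) - real z) * real (d i) ^ n)"
    by (rule acdata_c_closed[OF assms])
  also have "(\<Sum>i\<in>I. 1 / (real (d i) - real z) * real (d i) ^ n)
     = (\<Sum>b'\<le>N. (\<Sum>i\<in>{i\<in>I. d i = b'}. 1 / (real (d i) - real z)) * real b' ^ n)"
    by (rule regroup[OF fin dl])
  also have "(1 - ?K) * real z ^ n = (\<Sum>b'\<le>N. (if b' = z then 1 - ?K else 0) * real b' ^ n)"
  proof -
    have "(\<Sum>b'\<le>N. (if b' = z then 1 - ?K else 0) * real b' ^ n) = (\<Sum>b'\<le>N. if b' = z then (1 - ?K) * real z ^ n else 0)"
      by (intro sum.cong) auto
    then show ?thesis using zN by simp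
  qed
  finally show ?thesis by (simp add: sum.distrib distrib_right)
qed

lemma diff_zero:
  fixes u1 u2 :: "nat \<Rightarrow> real"
  assumes "\<And>n. (\<Sum>b\<le>N. u1 b * real b ^ n) = (\<Sum>b\<le>N. u2 b * real b ^ n)"
  shows "\<forall>b\<le>N. u1 b = u2 b"
proof -
  have "\<And>n. (\<Sum>b\<le>N. (u1 b - u2 b) * real b ^ n) = 0"
    using assms by (simp add: left_diff_distrib sum_subtractf)
  then have "\<forall>b\<le>N. u1 b - u2 b = 0" by (rule expsum_indep)
  then show ?thesis by simp
qed

lemma acdata_main:
  assumes D1: "acdata N z1 I1 d1 a1 b1 c1" and D2: "acdata N z2 I2 d2 a2 b2 c2"
  shows "a1 = a2 \<longleftrightarrow> b1 = b2"
proof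
  assume aeq: "a1 = a2"
  have "\<forall>b\<le>N. ((if b = N then real z1 else 0) + (\<Sum>i\<in>{i\<in>I1. d1 i = b}. 1))
             = ((if b = N then real z2 else 0) + (\<Sum>i\<in>{i\<in>I2. d2 i = b}. 1))"
    by (rule diff_zero) (metis acdata_a_form[OF D1] acdata_a_form[OF D2] aeq)
  then have "real z1 + (\<Sum>i\<in>{i\<in>I1. d1 i = N}. 1) = real z2 + (\<Sum>i\<in>{i\<in>I2. d2 i = N}. 1)"
    by auto
  moreover have "{i\<in>I1. d1 i = N} = {}" "{i\<in>I2. d2 i = N} = {}"
    using D1 D2 unfolding acdata_def by auto
  ultimately have zeq: "z1 = z2" by simp
  have Seq: "(\<Sum>i\<in>I1. d1 i ^ n) = (\<Sum>i\<in>I2. d2 i ^ n)" for n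
    using D1 D2 aeq zeq unfolding acdata_def by (metis add_left_cancel)
  have "c1 n = c2 n \<and> b1 n = b2 n" for n
  proof (induction n)
    case 0
    then show ?case using D1 D2 Seq[of 0] zeq unfolding acdata_def
      by (metis mult_cancel_left not_less0)
  next
    case (Suc n)
    then have "c1 (Suc n) = c2 (Suc n)" using D1 D2 unfolding acdata_def by metis
    then show ?case using D1 D2 Seq[of "Suc n"] zeq unfolding acdata_def
      by (metis mult_cancel_left not_less0)
  qed
  then show "b1 = b2" by auto
next
  assume beq: "b1 = b2"
  have ceq: "c1 n = c2 n" for n
    using D1 D2 beq unfolding acdata_def by (cases n) auto
  let ?K1 = "\<Sum>i\<in>I1. 1 / (real (d1 i) - real z1)"
  let ?K2 = "\<Sum>i\<in>I2. 1 / (real (d2 i) - real z2)"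
  have W: "\<forall>b\<le>N. ((if b = z1 then 1 - ?K1 else 0) + (\<Sum>i\<in>{i\<in>I1. d1 i = b}. 1 / (real (d1 i) - real z1)))
     = ((if b = z2 then 1 - ?K2 else 0) + (\<Sum>i\<in>{i\<in>I2. d2 i = b}. 1 / (real (d2 i) - real z2)))"
    by (rule diff_zero) (metis acdata_c_form[OF D1] acdata_c_form[OF D2] ceq)
  have zeq: "z1 = z2"
  proof (rule ccontr)
    assume ne: "z1 \<noteq> z2"
    show False
    proof (cases "z1 < z2")
      case True
      have "{i\<in>I1. d1 i = z1} = {}" "{i\<in>I2. d2 i = z1} = {}"
        using D1 D2 True unfolding acdata_def by fastforce+
      moreover have "z1 \<le> N" using D1 unfolding acdata_def by auto
      ultimately have E: "(if z1 = z1 then 1 - ?K1 else 0) + (\<Sum>i\<in>{i\<in>I1. d1 i = z1}. 1 / (real (d1 i) - real z1))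
         = (if z1 = z2 then 1 - ?K2 else 0) + (\<Sum>i\<in>{i\<in>I2. d2 i = z1}. 1 / (real (d2 i) - real z2))"
        using W by blast
      have "1 - ?K1 = 0"
        using E \<open>{i\<in>I1. d1 i = z1} = {}\<close> \<open>{i\<in>I2. d2 i = z1} = {}\<close> ne
        by (simp only: sum.empty if_True if_False add_0_right) (auto split: if_splits)
      then show False using D1 unfolding acdata_def by simp
    next
      case False
      then have lt: "z2 < z1" using ne by simp
      have "{i\<in>I1. d1 i = z2} = {}" "{i\<in>I2. d2 i = z2} = {}"
        using D1 D2 lt unfolding acdata_def by fastforce+
      moreover have "z2 \<le> N" using D2 unfolding acdata_def by auto
      ultimately have E: "(if z2 = z1 then 1 - ?K1 else 0) + (\<Sum>i\<in>{i\<in>I1. d1 i = z2}. 1 / (real (d1 i) - real z1))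
         = (if z2 = z2 then 1 - ?K2 else 0) + (\<Sum>i\<in>{i\<in>I2. d2 i = z2}. 1 / (real (d2 i) - real z2))"
        using W by blast
      have "1 - ?K2 = 0"
        using E \<open>{i\<in>I1. d1 i = z2} = {}\<close> \<open>{i\<in>I2. d2 i = z2} = {}\<close> ne
        by (simp only: sum.empty if_True if_False add_0_right) (auto split: if_splits)
      then show False using D2 unfolding acdata_def by simp
    qed
  qed
  have Seq: "(\<Sum>i\<in>I1. d1 i ^ n) = (\<Sum>i\<in>I2. d2 i ^ n)" for n
    using D1 D2 beq zeq ceq unfolding acdata_def by (metis add_left_cancel)
  have "N * a1 n = N * a2 n" for n
    using D1 D2 zeq Seq unfolding acdata_def by metis
  then show "a1 = a2" using D1 unfolding acdata_def by auto
qed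


context group begin

lemma inv_cancel_left_aux [simp]:
  assumes "g \<in> carrier G" "y \<in> carrier G"
  shows "inv g \<otimes> (g \<otimes> y) = y"
  using assms by (simp add: m_assoc[symmetric])

lemma conj_fix_iff:
  assumes "g \<in> carrier G" "a \<in> carrier G"
  shows "g \<otimes> a \<otimes> inv g = a \<longleftrightarrow> a \<otimes> g = g \<otimes> a"
proof
  assume h: "g \<otimes> a \<otimes> inv g = a"
  have "g \<otimes> a = g \<otimes> a \<otimes> inv g \<otimes> g" using assms by (simp add: m_assoc)
  then show "a \<otimes> g = g \<otimes> a" using h by simp
next
  assume h: "a \<otimes> g = g \<otimes> a"
  have "g \<otimes> a \<otimes> inv g = a \<otimes> g \<otimes> inv g" using h by simp
  then show "g \<otimes> a \<otimes> inv g = a" using assms by (simp add: m_assoc)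
qed

lemma sconj_in_tuples:
  assumes "g \<in> carrier G" "x \<in> tuples G n"
  shows "sconj G n g x \<in> tuples G n"
  using assms unfolding sconj_def tuples_def by (auto simp: PiE_iff)

lemma sconj_one:
  assumes "x \<in> tuples G n"
  shows "sconj G n \<one> x = x"
proof
  fix i show "sconj G n \<one> x i = x i"
    using assms unfolding sconj_def tuples_def by (cases "i < n") (auto simp: PiE_iff extensional_def)
qed

lemma sconj_mult:
  assumes "g \<in> carrier G" "h \<in> carrier G" "x \<in> tuples G n"
  shows "sconj G n (g \<otimes> h) x = sconj G n g (sconj G n h x)"
proof
  fix i show "sconj G n (g \<otimes> h) x i = sconj G n g (sconj G n h x) i"
    using assms unfolding sconj_def tuples_def
    by (cases "i < n") (auto simp: PiE_iff m_assoc inv_mult_group)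
qed

lemma sconj_comm:
  assumes "g \<in> carrier G" "x \<in> comm_tuples G n"
  shows "sconj G n g x \<in> comm_tuples G n"
proof -
  have xt: "x \<in> tuples G n" using assms unfolding comm_tuples_def by auto
  have "sconj G n g x i \<otimes> sconj G n g x j = sconj G n g x j \<otimes> sconj G n g x i"
    if "i < n" "j < n" for i j
  proof -
    have xi: "x i \<in> carrier G" "x j \<in> carrier G" using xt that unfolding tuples_def by auto
    have c: "x i \<otimes> x j = x j \<otimes> x i" using assms that unfolding comm_tuples_def by auto
    have "g \<otimes> x i \<otimes> inv g \<otimes> (g \<otimes> x j \<otimes> inv g) = g \<otimes> (x i \<otimes> x j) \<otimes> inv g"
      using xi assms(1) by (simp add: m_assoc)
    also have "\<dots> = g \<otimes> (x j \<otimes> x i) \<otimes> inv g" using c by simp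
    also have "\<dots> = g \<otimes> x j \<otimes> inv g \<otimes> (g \<otimes> x i \<otimes> inv g)"
      using xi assms(1) by (simp add: m_assoc)
    finally show ?thesis using that unfolding sconj_def by simp
  qed
  then show ?thesis using sconj_in_tuples[OF assms(1) xt] unfolding comm_tuples_def by auto
qed

lemma sconj_action:
  assumes X: "X \<subseteq> tuples G n" and st: "\<And>g x. g \<in> carrier G \<Longrightarrow> x \<in> X \<Longrightarrow> sconj G n g x \<in> X"
  shows "group_action G X (\<lambda>g. restrict (sconj G n g) X)"
proof -
  have inB: "restrict (sconj G n g) X \<in> Bij X" if g: "g \<in> carrier G" for g
  proof -
    have "bij_betw (sconj G n g) X X"
    proof (rule bij_betwI[where g = "sconj G n (inv g)"])
      show "sconj G n g \<in> X \<rightarrow> X" using st g by auto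
      show "sconj G n (inv g) \<in> X \<rightarrow> X" using st g by auto
      fix x assume x: "x \<in> X"
      then have xt: "x \<in> tuples G n" using X by auto
      show "sconj G n (inv g) (sconj G n g x) = x"
        using sconj_mult[OF inv_closed[OF g] g xt] sconj_one[OF xt] g by simp
      show "sconj G n g (sconj G n (inv g) x) = x"
        using sconj_mult[OF g inv_closed[OF g] xt] sconj_one[OF xt] g by simp
    qed
    then show ?thesis unfolding Bij_def by (auto simp: bij_betw_def)
  qed
  have hom: "restrict (sconj G n (g \<otimes> h)) X = restrict (sconj G n g) X \<otimes>\<^bsub>BijGroup X\<^esub> restrict (sconj G n h) X"
    if "g \<in> carrier G" "h \<in> carrier G" for g h
    using inB[OF that(1)] inB[OF that(2)] that X st
    by (auto simp: BijGroup_def compose_def sconj_mult intro!: ext)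
  show ?thesis
    unfolding group_action_def group_hom_def group_hom_axioms_def hom_def
    using inB hom group_BijGroup[of X] is_group by (auto simp: BijGroup_def[of X, symmetric]) (auto simp: BijGroup_def)
qed

lemma burnside_sconj:
  assumes fin: "finite (carrier G)" and X: "X \<subseteq> tuples G n"
    and st: "\<And>g x. g \<in> carrier G \<Longrightarrow> x \<in> X \<Longrightarrow> sconj G n g x \<in> X"
  shows "card (carrier G) * num_orbits G n X = (\<Sum>g\<in>carrier G. card {x\<in>X. sconj G n g x = x})"
proof -
  interpret A: group_action G X "\<lambda>g. restrict (sconj G n g) X" by (rule sconj_action[OF X st])
  have finT: "finite (tuples G n)" unfolding tuples_def using fin by (auto intro: finite_PiE)
  have finX: "finite X" using finite_subset[OF X finT] .
  have orb: "orbits G X (\<lambda>g. restrict (sconj G n g) X) = sconj_orbit G n ` X"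
    unfolding orbits_def orbit_def sconj_orbit_def by auto
  have inv: "invariants X (\<lambda>g. restrict (sconj G n g) X) g = {x\<in>X. sconj G n g x = x}" for g
    unfolding invariants_def by auto
  show ?thesis using A.burnside[OF fin finX] unfolding orb inv num_orbits_def order_def
    by (simp add: mult.commute)
qed


lemma sconj_fixed_iff:
  assumes g: "g \<in> carrier G" and x: "x \<in> tuples G n"
  shows "sconj G n g x = x \<longleftrightarrow> (\<forall>i<n. x i \<otimes> g = g \<otimes> x i)"
proof
  assume h: "sconj G n g x = x"
  show "\<forall>i<n. x i \<otimes> g = g \<otimes> x i"
  proof (intro allI impI)
    fix i assume i: "i < n"
    then have "g \<otimes> x i \<otimes> inv g = x i" using fun_cong[OF h, of i] unfolding sconj_def by simp
    moreover have "x i \<in> carrier G" using x i unfolding tuples_def by auto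
    ultimately show "x i \<otimes> g = g \<otimes> x i" using conj_fix_iff[OF g] by blast
  qed
next
  assume h: "\<forall>i<n. x i \<otimes> g = g \<otimes> x i"
  show "sconj G n g x = x"
  proof
    fix i show "sconj G n g x i = x i"
    proof (cases "i < n")
      case True
      then have "x i \<in> carrier G" using x unfolding tuples_def by auto
      then have "g \<otimes> x i \<otimes> inv g = x i" using h True conj_fix_iff[OF g] by blast
      then show ?thesis using True unfolding sconj_def by simp
    next
      case False
      then show ?thesis using x unfolding tuples_def sconj_def by (auto simp: PiE_iff extensional_def)
    qed
  qed
qed

lemma fix_tuples:
  assumes g: "g \<in> carrier G"
  shows "{x \<in> tuples G n. sconj G n g x = x} = PiE {0..<n} (\<lambda>_. grp_centralizer G g)"
proof -
  have "x \<in> PiE {0..<n} (\<lambda>_. grp_centralizer G g) \<longleftrightarrow> x \<in> tuples G n \<and> (\<forall>i<n. x i \<otimes> g = g \<otimes> x i)" for x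
    unfolding tuples_def grp_centralizer_def by (auto simp: PiE_iff)
  then show ?thesis using sconj_fixed_iff[OF g] by blast
qed

lemma card_PiE_const: "finite K \<Longrightarrow> card (PiE {0..<n} (\<lambda>_. K)) = card K ^ n"
  by (simp add: card_PiE)

definition ctup :: "'a set \<Rightarrow> nat \<Rightarrow> (nat \<Rightarrow> 'a) set" where
  "ctup K n = {x \<in> PiE {0..<n} (\<lambda>_. K). \<forall>i<n. \<forall>j<n. x i \<otimes> x j = x j \<otimes> x i}"

lemma fix_comm:
  assumes g: "g \<in> carrier G"
  shows "{x \<in> comm_tuples G n. sconj G n g x = x} = ctup (grp_centralizer G g) n"
proof -
  have "x \<in> ctup (grp_centralizer G g) n \<longleftrightarrow> x \<in> comm_tuples G n \<and> (\<forall>i<n. x i \<otimes> g = g \<otimes> x i)" for x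
    unfolding ctup_def comm_tuples_def tuples_def grp_centralizer_def by (auto simp: PiE_iff)
  then show ?thesis using sconj_fixed_iff[OF g] unfolding comm_tuples_def by blast
qed

lemma center_centralizer: "g \<in> grp_center G \<Longrightarrow> grp_centralizer G g = carrier G"
  unfolding grp_center_def grp_centralizer_def by auto

lemma ctup_carrier: "ctup (carrier G) n = comm_tuples G n"
  unfolding ctup_def comm_tuples_def tuples_def by auto

lemma ctup_AC:
  assumes "AC_group G" "g \<in> carrier G" "g \<notin> grp_center G"
  shows "ctup (grp_centralizer G g) n = PiE {0..<n} (\<lambda>_. grp_centralizer G g)"
  using assms unfolding ctup_def AC_group_def by (auto simp: PiE_iff extensional_def)

lemma center_sub: "a \<in> carrier G \<Longrightarrow> grp_center G \<subseteq> grp_centralizer G a"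
  unfolding grp_center_def grp_centralizer_def by auto

lemma centralizer_sub: "grp_centralizer G a \<subseteq> carrier G"
  unfolding grp_centralizer_def by auto

lemma self_centralizer: "a \<in> carrier G \<Longrightarrow> a \<in> grp_centralizer G a"
  unfolding grp_centralizer_def by auto

lemma AC_same_centralizer:
  assumes AC: "AC_group G" and g: "g \<in> carrier G" "g \<notin> grp_center G"
    and h: "h \<in> grp_centralizer G g" "h \<notin> grp_center G"
  shows "grp_centralizer G h = grp_centralizer G g"
proof
  have hc: "h \<in> carrier G" using h centralizer_sub by auto
  show "grp_centralizer G g \<subseteq> grp_centralizer G h"
  proof
    fix x assume x: "x \<in> grp_centralizer G g"
    then have "x \<otimes> h = h \<otimes> x" using AC g h unfolding AC_group_def by blast
    then show "x \<in> grp_centralizer G h" using x unfolding grp_centralizer_def by auto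
  qed
  have gh: "g \<in> grp_centralizer G h" using h g unfolding grp_centralizer_def by auto
  show "grp_centralizer G h \<subseteq> grp_centralizer G g"
  proof
    fix x assume x: "x \<in> grp_centralizer G h"
    then have "x \<otimes> g = g \<otimes> x" using AC hc h gh unfolding AC_group_def by blast
    then show "x \<in> grp_centralizer G g" using x unfolding grp_centralizer_def by auto
  qed
qed

lemma noncentral_bounds:
  assumes fin: "finite (carrier G)" and g: "g \<in> carrier G" "g \<notin> grp_center G"
  shows "card (grp_center G) < card (grp_centralizer G g) \<and> card (grp_centralizer G g) < card (carrier G)"
proof
  have f: "finite (grp_centralizer G g)" using finite_subset[OF centralizer_sub fin] .
  have "grp_center G \<subset> grp_centralizer G g" using center_sub[OF g(1)] self_centralizer[OF g(1)] g(2) by blast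
  then show "card (grp_center G) < card (grp_centralizer G g)" using psubset_card_mono[OF f] by blast
  have "grp_centralizer G g \<noteq> carrier G"
  proof
    assume "grp_centralizer G g = carrier G"
    then have "\<forall>x\<in>carrier G. x \<otimes> g = g \<otimes> x" unfolding grp_centralizer_def by blast
    then have "g \<in> grp_center G" using g unfolding grp_center_def by auto
    then show False using g by simp
  qed
  then have "grp_centralizer G g \<subset> carrier G" using centralizer_sub by blast
  then show "card (grp_centralizer G g) < card (carrier G)" using psubset_card_mono[OF fin] by blast
qed

lemma K_ne_1:
  assumes AC: "AC_group G" and fin: "finite (carrier G)"
  shows "(\<Sum>g\<in>carrier G - grp_center G. 1 / (real (card (grp_centralizer G g)) - real (card (grp_center G)))) \<noteq> 1"
    (is "?S \<noteq> 1")
proof (cases "carrier G - grp_center G = {}")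
  case True
  show ?thesis unfolding True by simp
next
  case False
  then obtain g0 where g0: "g0 \<in> carrier G" "g0 \<notin> grp_center G" by blast
  let ?z = "card (grp_center G)"
  let ?C = "grp_centralizer G g0"
  let ?f = "\<lambda>g. 1 / (real (card (grp_centralizer G g)) - real ?z)"
  have bnd: "?z < card ?C" using noncentral_bounds[OF fin g0] by simp
  have finC: "finite ?C" using finite_subset[OF centralizer_sub fin] .
  have split: "carrier G - grp_center G = (?C - grp_center G) \<union> (carrier G - ?C)"
    using centralizer_sub center_sub[OF g0(1)] by blast
  have disj: "(?C - grp_center G) \<inter> (carrier G - ?C) = {}" by blast
  have "?S = sum ?f (?C - grp_center G) + sum ?f (carrier G - ?C)"
    unfolding split using fin finC by (intro sum.union_disjoint) auto
  moreover have "sum ?f (?C - grp_center G) = 1"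
  proof -
    have "sum ?f (?C - grp_center G) = sum (\<lambda>_. 1 / (real (card ?C) - real ?z)) (?C - grp_center G)"
    proof (intro sum.cong refl)
      fix h assume h: "h \<in> ?C - grp_center G"
      then have "grp_centralizer G h = ?C" using AC_same_centralizer[OF AC g0, of h] by blast
      then show "?f h = 1 / (real (card ?C) - real ?z)" by simp
    qed
    also have cD: "card (?C - grp_center G) = card ?C - ?z"
      using card_Diff_subset[OF finite_subset[OF center_sub[OF g0(1)] finC] center_sub[OF g0(1)]] .
    have eq: "real (card ?C - ?z) = real (card ?C) - real ?z" using bnd by (simp add: of_nat_diff)
    have pos: "real (card ?C) - real ?z > 0" using bnd by simp
    have "sum (\<lambda>_. 1 / (real (card ?C) - real ?z)) (?C - grp_center G) = real (card ?C - ?z) * (1 / (real (card ?C) - real ?z))"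
      by (simp only: sum_constant cD)
    also have "\<dots> = 1" unfolding eq using pos by simp
    finally show ?thesis .
  qed
  moreover have "sum ?f (carrier G - ?C) > 0"
  proof (rule sum_pos)
    show "finite (carrier G - ?C)" using fin by simp
    have "?C \<noteq> carrier G" using noncentral_bounds[OF fin g0] by auto
    then show "carrier G - ?C \<noteq> {}" using centralizer_sub by blast
    fix g assume g: "g \<in> carrier G - ?C"
    then have "g \<notin> grp_center G" using center_sub[OF g0(1)] by blast
    then have "?z < card (grp_centralizer G g)" using noncentral_bounds[OF fin] g by blast
    then have "real ?z < real (card (grp_centralizer G g))" by simp
    then show "?f g > 0" by simp
  qed
  ultimately show ?thesis by linarith
qed

lemma comm_tuples_zero: "card (comm_tuples G 0) = 1"
  unfolding comm_tuples_def tuples_def by simp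

lemma comm_rec:
  assumes fin: "finite (carrier G)"
  shows "card (comm_tuples G (Suc n)) = (\<Sum>a\<in>carrier G. card (ctup (grp_centralizer G a) n))"
proof -
  let ?f = "\<lambda>x. (x n, restrict x {0..<n})"
  let ?g = "\<lambda>(a, y). y(n := a)"
  let ?S = "SIGMA a:carrier G. ctup (grp_centralizer G a) n"
  have bij: "bij_betw ?f (comm_tuples G (Suc n)) ?S"
  proof (rule bij_betw_byWitness[where f' = ?g])
    show "\<forall>x\<in>comm_tuples G (Suc n). ?g (?f x) = x"
    proof
      fix x assume x: "x \<in> comm_tuples G (Suc n)"
      show "?g (?f x) = x"
      proof
        fix i
        have xe: "x \<in> extensional {0..<Suc n}" using x unfolding comm_tuples_def tuples_def by (simp add: PiE_iff)
        have "?g (?f x) i = (if i = n then x n else if i < n then x i else undefined)" by simp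
        also have "\<dots> = x i"
        proof (cases "i = n")
          case False
          then show ?thesis using xe by (cases "i < n") (auto simp: extensional_def)
        qed simp
        finally show "?g (?f x) i = x i" .
      qed
    qed
    show "\<forall>p\<in>?S. ?f (?g p) = p"
    proof
      fix p assume p: "p \<in> ?S"
      then obtain a y where pa: "p = (a, y)" "a \<in> carrier G" "y \<in> ctup (grp_centralizer G a) n" by auto
      have "restrict (y(n := a)) {0..<n} = y"
      proof
        fix i show "restrict (y(n := a)) {0..<n} i = y i"
          using pa(3) unfolding ctup_def by (cases "i < n") (auto simp: PiE_iff extensional_def)
      qed
      then show "?f (?g p) = p" using pa by simp
    qed
    show "?f ` comm_tuples G (Suc n) \<subseteq> ?S"
    proof
      fix q assume "q \<in> ?f ` comm_tuples G (Suc n)"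
      then obtain x where q: "q = ?f x" and x: "x \<in> comm_tuples G (Suc n)" by blast
      have xc: "\<And>i. i < Suc n \<Longrightarrow> x i \<in> carrier G" using x unfolding comm_tuples_def tuples_def by auto
      have xx: "\<And>i j. i < Suc n \<Longrightarrow> j < Suc n \<Longrightarrow> x i \<otimes> x j = x j \<otimes> x i"
        using x unfolding comm_tuples_def by auto
      have "restrict x {0..<n} \<in> ctup (grp_centralizer G (x n)) n"
        unfolding ctup_def grp_centralizer_def using xc xx by (auto simp: PiE_iff)
      then show "q \<in> ?S" using q xc by auto
    qed
    show "?g ` ?S \<subseteq> comm_tuples G (Suc n)"
    proof
      fix q assume "q \<in> ?g ` ?S"
      then obtain a y where q: "q = y(n := a)" and a: "a \<in> carrier G" and y: "y \<in> ctup (grp_centralizer G a) n"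
        by auto
      have yc: "\<And>i. i < n \<Longrightarrow> y i \<in> carrier G \<and> y i \<otimes> a = a \<otimes> y i"
        using y unfolding ctup_def grp_centralizer_def by auto
      have yy: "\<And>i j. i < n \<Longrightarrow> j < n \<Longrightarrow> y i \<otimes> y j = y j \<otimes> y i"
        using y unfolding ctup_def by auto
      have ye: "\<And>i. \<not> i < n \<Longrightarrow> y i = undefined"
        using y unfolding ctup_def by (auto simp: PiE_iff extensional_def)
      have qi: "q i = (if i = n then a else y i)" for i unfolding q by simp
      have qc: "q i \<in> carrier G" if "i < Suc n" for i
        using that a yc unfolding qi by (cases "i = n") auto
      have qe: "q i = undefined" if "\<not> i < Suc n" for i
        using that ye unfolding qi by auto
      have qq: "q i \<otimes> q j = q j \<otimes> q i" if "i < Suc n" "j < Suc n" for i j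
      proof (cases "i = n"; cases "j = n")
        assume "i = n" "j = n" then show ?thesis by simp
      next
        assume "i = n" "j \<noteq> n" then show ?thesis using that yc[of j] unfolding qi by auto
      next
        assume "i \<noteq> n" "j = n" then show ?thesis using that yc[of i] unfolding qi by auto
      next
        assume "i \<noteq> n" "j \<noteq> n" then show ?thesis using that yy[of i j] unfolding qi by auto
      qed
      have "q \<in> PiE {0..<Suc n} (\<lambda>_. carrier G)"
        using qc qe by (auto simp: PiE_iff extensional_def)
      then show "q \<in> comm_tuples G (Suc n)"
        unfolding comm_tuples_def tuples_def using qq by blast
    qed
  qed
  have finS: "\<forall>a\<in>carrier G. finite (ctup (grp_centralizer G a) n)"
  proof
    fix a assume "a \<in> carrier G"
    have "ctup (grp_centralizer G a) n \<subseteq> PiE {0..<n} (\<lambda>_. carrier G)"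
      unfolding ctup_def grp_centralizer_def by (auto simp: PiE_iff extensional_def)
    moreover have "finite (PiE {0..<n} (\<lambda>_. carrier G))" using fin by (auto intro: finite_PiE)
    ultimately show "finite (ctup (grp_centralizer G a) n)" by (rule finite_subset)
  qed
  have "card (comm_tuples G (Suc n)) = card ?S" using bij by (rule bij_betw_same_card)
  also have "\<dots> = (\<Sum>a\<in>carrier G. card (ctup (grp_centralizer G a) n))"
    using fin finS by (rule card_SigmaI)
  finally show ?thesis .
qed

lemma acdata_group:
  assumes AC: "AC_group G" and fin: "finite (carrier G)"
  shows "acdata (card (carrier G)) (card (grp_center G)) (carrier G - grp_center G)
           (\<lambda>g. card (grp_centralizer G g)) (alpha G) (beta G) (\<lambda>n. card (comm_tuples G n))"
proof -
  let ?N = "card (carrier G)"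
  let ?Z = "grp_center G"
  let ?z = "card ?Z"
  let ?d = "\<lambda>g. card (grp_centralizer G g)"
  have Zsub: "?Z \<subseteq> carrier G" unfolding grp_center_def by auto
  have finC: "\<And>g. finite (grp_centralizer G g)" using finite_subset[OF centralizer_sub fin] .
  have Npos: "0 < ?N" using fin one_closed card_gt_0_iff by blast
  have zN: "?z \<le> ?N" using card_mono[OF fin Zsub] .
  have bnds: "\<forall>g\<in>carrier G - ?Z. ?z < ?d g \<and> ?d g < ?N"
    using noncentral_bounds[OF fin] by auto
  have split: "\<And>f. (\<Sum>g\<in>carrier G. f g) = (\<Sum>g\<in>carrier G - ?Z. f g) + (\<Sum>g\<in>?Z. f g)"
    by (rule sum.subset_diff[OF Zsub fin])
  have cZ: "\<And>g. g \<in> ?Z \<Longrightarrow> grp_centralizer G g = carrier G" by (rule center_centralizer)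
  have A: "?N * alpha G n = ?z * ?N ^ n + (\<Sum>g\<in>carrier G - ?Z. ?d g ^ n)" for n
  proof -
    have "?N * alpha G n = (\<Sum>g\<in>carrier G. card {x\<in>tuples G n. sconj G n g x = x})"
      unfolding alpha_def by (rule burnside_sconj[OF fin subset_refl sconj_in_tuples])
    also have "\<dots> = (\<Sum>g\<in>carrier G. ?d g ^ n)"
    proof (intro sum.cong refl)
      fix g assume "g \<in> carrier G"
      then show "card {x\<in>tuples G n. sconj G n g x = x} = ?d g ^ n"
        using fix_tuples card_PiE_const[OF finC] by simp
    qed
    also have "\<dots> = (\<Sum>g\<in>carrier G - ?Z. ?d g ^ n) + (\<Sum>g\<in>?Z. ?N ^ n)"
      unfolding split using cZ by simp
    finally show ?thesis by simp
  qed
  have B: "?N * beta G n = ?z * card (comm_tuples G n) + (\<Sum>g\<in>carrier G - ?Z. ?d g ^ n)" for n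
  proof -
    have sub: "comm_tuples G n \<subseteq> tuples G n" unfolding comm_tuples_def by auto
    have "?N * beta G n = (\<Sum>g\<in>carrier G. card {x\<in>comm_tuples G n. sconj G n g x = x})"
      unfolding beta_def by (rule burnside_sconj[OF fin sub sconj_comm])
    also have "\<dots> = (\<Sum>g\<in>carrier G. card (ctup (grp_centralizer G g) n))"
      using fix_comm by (intro sum.cong) auto
    also have "\<dots> = (\<Sum>g\<in>carrier G - ?Z. card (ctup (grp_centralizer G g) n)) + (\<Sum>g\<in>?Z. card (comm_tuples G n))"
      unfolding split using cZ ctup_carrier by simp
    also have "(\<Sum>g\<in>carrier G - ?Z. card (ctup (grp_centralizer G g) n)) = (\<Sum>g\<in>carrier G - ?Z. ?d g ^ n)"
    proof (intro sum.cong refl)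
      fix g assume "g \<in> carrier G - ?Z"
      then show "card (ctup (grp_centralizer G g) n) = ?d g ^ n"
        using ctup_AC[OF AC] card_PiE_const[OF finC] by simp
    qed
    finally show ?thesis by simp
  qed
  have C: "card (comm_tuples G (Suc n)) = ?N * beta G n" for n
  proof -
    have sub: "comm_tuples G n \<subseteq> tuples G n" unfolding comm_tuples_def by auto
    have "?N * beta G n = (\<Sum>g\<in>carrier G. card {x\<in>comm_tuples G n. sconj G n g x = x})"
      unfolding beta_def by (rule burnside_sconj[OF fin sub sconj_comm])
    also have "\<dots> = (\<Sum>g\<in>carrier G. card (ctup (grp_centralizer G g) n))"
      using fix_comm by (intro sum.cong) auto
    finally show ?thesis using comm_rec[OF fin] by simp
  qed
  have finD: "finite (carrier G - ?Z)" using fin by simp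
  show ?thesis unfolding acdata_def
    by (intro conjI allI Npos zN finD bnds A B C comm_tuples_zero K_ne_1[OF AC fin])
qed

end


theorem theorem6p5:
  fixes G :: "('a, 'b) monoid_scheme" and H :: "('c, 'd) monoid_scheme"
  assumes "group G" and "group H"
    and "finite (carrier G)" and "finite (carrier H)"
    and "AC_group G" and "AC_group H"
    and "card (carrier G) = card (carrier H)"
  shows "A_series G = A_series H \<longleftrightarrow> B_series G = B_series H"
proof -
  have DG: "acdata (card (carrier G)) (card (grp_center G)) (carrier G - grp_center G)
           (\<lambda>g. card (grp_centralizer G g)) (alpha G) (beta G) (\<lambda>n. card (comm_tuples G n))"
    by (rule group.acdata_group[OF assms(1) assms(5) assms(3)])
  have DH: "acdata (card (carrier H)) (card (grp_center H)) (carrier H - grp_center H)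
           (\<lambda>g. card (grp_centralizer H g)) (alpha H) (beta H) (\<lambda>n. card (comm_tuples H n))"
    by (rule group.acdata_group[OF assms(2) assms(6) assms(4)])
  have main: "alpha G = alpha H \<longleftrightarrow> beta G = beta H"
    using acdata_main[OF DG DH[folded assms(7)]] .
  have eA: "A_series G = A_series H \<longleftrightarrow> alpha G = alpha H"
    unfolding A_series_def by (auto simp: fps_eq_iff fun_eq_iff)
  have eB: "B_series G = B_series H \<longleftrightarrow> beta G = beta H"
    unfolding B_series_def by (auto simp: fps_eq_iff fun_eq_iff)
  show ?thesis using main eA eB by simp
qed

end
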